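(* Let $\mathcal{F}$ be the class of endogenous subgroups models with $k$ components whose component densities belong to an exponential family $\{h(x)\exp(\langle\theta,T(x)\rangle-A(\theta)):\theta\in\Theta\}$. Then $\mathcal{H}=\{x\mapsto\frac{f(1\mid x)}{f(j\mid x)}: j\in[k], f\in\mathcal{F}\}$ satisfies ${\mathrm{Pdim}}(\mathcal{H})\le\dim(T(x))+1$.
   Context: An endogenous subgroups model $f$ with $k$ components has mixing weights $w_1,\dots,w_k$ and component densities $f(x\mid g)$; $f(g\mid x)=\frac{w_gf(x\mid g)}{\sum_{j\in[k]}w_jf(x\mid j)}$. $T(x)$ is the sufficient statistic of the exponential family. ${\mathrm{Pdim}}$ of a real-valued class is the VC dimension of the class of thresholded functions $x\mapsto\mathrm{sgn}(h(x)-r)$, $r\in\mathbb{R}$. *)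

theory Defs
  imports "HOL-Analysis.Analysis" "HOL-Library.Extended_Nat"
begin

definition shatters :: "'a set set \<Rightarrow> 'a set \<Rightarrow> bool" where
  "shatters C S \<longleftrightarrow> (\<forall>B \<subseteq> S. \<exists>c \<in> C. c \<inter> S = B)"

definition vc_dim :: "'a set set \<Rightarrow> enat" where
  "vc_dim C = Sup {enat (card S) | S. finite S \<and> shatters C S}"

text \<open>Pseudo-dimension: VC dimension of the thresholded class
  (x, r) \<mapsto> sgn(h x - r), with sign +1 read as h x \<ge> r.\<close>
definition pdim :: "('a \<Rightarrow> real) set \<Rightarrow> enat" where
  "pdim H = vc_dim ((\<lambda>h. {(x, r). h x \<ge> r}) ` H)"

definition ef_density ::
  "('x \<Rightarrow> real) \<Rightarrow> ('x \<Rightarrow> 'd::euclidean_space) \<Rightarrow> ('d \<Rightarrow> real) \<Rightarrow> 'd \<Rightarrow> 'x \<Rightarrow> real" where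
  "ef_density hb T A \<theta> x = hb x * exp (\<theta> \<bullet> T x - A \<theta>)"

definition posterior ::
  "('x \<Rightarrow> real) \<Rightarrow> ('x \<Rightarrow> 'd::euclidean_space) \<Rightarrow> ('d \<Rightarrow> real) \<Rightarrow> nat \<Rightarrow>
   (nat \<Rightarrow> real) \<Rightarrow> (nat \<Rightarrow> 'd) \<Rightarrow> nat \<Rightarrow> 'x \<Rightarrow> real" where
  "posterior hb T A k w th g x =
     w g * ef_density hb T A (th g) x / (\<Sum>j\<in>{1..k}. w j * ef_density hb T A (th j) x)"

definition esm_class :: "('d::euclidean_space) set \<Rightarrow> nat \<Rightarrow> ((nat \<Rightarrow> real) \<times> (nat \<Rightarrow> 'd)) set" where
  "esm_class \<Theta> k = {(w, th). (\<forall>j\<in>{1..k}. w j \<ge> 0) \<and> (\<Sum>j\<in>{1..k}. w j) = 1 \<and> (\<forall>j\<in>{1..k}. th j \<in> \<Theta>)}"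

end

theory Submission
  imports Defs
begin


lemma key_contra:
  fixes y :: "'p \<Rightarrow> 'd::euclidean_space" and t l :: "'p \<Rightarrow> real"
  assumes fin: "finite S" and s0: "sum l S = 0" and s1: "(\<Sum>p\<in>S. l p *\<^sub>R y p) = 0"
    and p0: "p0 \<in> S" "l p0 > 0" and p1: "p1 \<in> S" "l p1 < 0"
    and P: "\<forall>p\<in>S. (l p > 0 \<longleftrightarrow> t p \<le> v1 \<bullet> y p + b1)"
    and N: "\<forall>p\<in>S. (l p < 0 \<longleftrightarrow> t p \<le> v2 \<bullet> y p + b2)"
  shows False
proof -
  have lin: "(\<Sum>p\<in>S. l p * (v \<bullet> y p + b)) = 0" for v b
  proof -
    have "(\<Sum>p\<in>S. l p * (v \<bullet> y p + b)) = v \<bullet> (\<Sum>p\<in>S. l p *\<^sub>R y p) + b * sum l S"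
      by (simp add: inner_sum_right sum_distrib_left sum.distrib algebra_simps)
    then show ?thesis using s0 s1 by simp
  qed
  have A: "0 < (\<Sum>p\<in>S. l p * ((v1 \<bullet> y p + b1) - t p))"
  proof (rule sum_pos2[OF fin p1(1)])
    have "t p1 > v1 \<bullet> y p1 + b1" using P p1 by force
    then show "0 < l p1 * (v1 \<bullet> y p1 + b1 - t p1)" using p1 by (intro mult_neg_neg) auto
    show "0 \<le> l i * (v1 \<bullet> y i + b1 - t i)" if i: "i \<in> S" for i
    proof -
      consider "l i > 0" | "l i = 0" | "l i < 0" by linarith
      then show "0 \<le> l i * (v1 \<bullet> y i + b1 - t i)"
      proof cases
        case 1 then have "t i \<le> v1 \<bullet> y i + b1" using P i by blast
        then show ?thesis using 1 by (intro mult_nonneg_nonneg) auto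
      next
        case 3 then have "\<not> t i \<le> v1 \<bullet> y i + b1" using P i by force
        then show ?thesis using 3 by (intro mult_nonpos_nonpos) auto
      next
        case 2 then show ?thesis by simp
      qed
    qed
  qed
  have B: "0 < (\<Sum>p\<in>S. l p * (t p - (v2 \<bullet> y p + b2)))"
  proof (rule sum_pos2[OF fin p0(1)])
    show "0 < l p0 * (t p0 - (v2 \<bullet> y p0 + b2))" using N p0 by auto
    show "0 \<le> l i * (t i - (v2 \<bullet> y i + b2))" if i: "i \<in> S" for i
    proof -
      consider "l i > 0" | "l i = 0" | "l i < 0" by linarith
      then show "0 \<le> l i * (t i - (v2 \<bullet> y i + b2))"
      proof cases
        case 1 then have "\<not> t i \<le> v2 \<bullet> y i + b2" using N i by force
        then show ?thesis using 1 by (intro mult_nonneg_nonneg) auto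
      next
        case 3 then have "t i \<le> v2 \<bullet> y i + b2" using N i by blast
        then show ?thesis using 3 by (intro mult_nonpos_nonpos) auto
      next
        case 2 then show ?thesis by simp
      qed
    qed
  qed
  have "(\<Sum>p\<in>S. l p * ((v1 \<bullet> y p + b1) - t p)) = (\<Sum>p\<in>S. l p * (v1 \<bullet> y p + b1)) - (\<Sum>p\<in>S. l p * t p)"
    by (simp add: right_diff_distrib sum_subtractf)
  moreover have "(\<Sum>p\<in>S. l p * (t p - (v2 \<bullet> y p + b2))) = (\<Sum>p\<in>S. l p * t p) - (\<Sum>p\<in>S. l p * (v2 \<bullet> y p + b2))"
    by (simp add: right_diff_distrib sum_subtractf)
  ultimately show False using A B lin[of v1 b1] lin[of v2 b2] by linarith
qed

lemma dep_exists:
  fixes y :: "'p \<Rightarrow> 'd::euclidean_space"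
  assumes fin: "finite S" and card: "card S \<ge> DIM('d) + 2"
  shows "\<exists>l. sum l S = 0 \<and> (\<Sum>p\<in>S. l p *\<^sub>R y p) = 0 \<and> (\<exists>p\<in>S. l p \<noteq> 0)"
proof (cases "inj_on y S")
  case False
  then obtain p q where pq: "p \<in> S" "q \<in> S" "p \<noteq> q" "y p = y q" unfolding inj_on_def by blast
  define l where "l = (\<lambda>z. if z = p then 1 else if z = q then -1 else (0::real))"
  have "sum l S = sum l {p, q}" using pq fin by (intro sum.mono_neutral_right) (auto simp: l_def)
  moreover have "(\<Sum>z\<in>S. l z *\<^sub>R y z) = (\<Sum>z\<in>{p,q}. l z *\<^sub>R y z)"
    using pq fin by (intro sum.mono_neutral_right) (auto simp: l_def)
  ultimately show ?thesis using pq by (intro exI[of _ l]) (auto simp: l_def)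
next
  case True
  have "affine_dependent (y ` S)"
    using affine_dependent_biggerset[of "y ` S"] fin card card_image[OF True] by auto
  then obtain U where U: "sum U (y ` S) = 0" "\<exists>v\<in>y ` S. U v \<noteq> 0" "(\<Sum>v\<in>y ` S. U v *\<^sub>R v) = 0"
    using affine_dependent_explicit_finite[of "y ` S"] fin by auto
  show ?thesis
    apply (rule exI[of _ "\<lambda>p. U (y p)"])
    using U sum.reindex[OF True, of U] sum.reindex[OF True, of "\<lambda>v. U v *\<^sub>R v"] by auto
qed



lemma post_facts:
  fixes hb :: "'x \<Rightarrow> real" and T :: "'x \<Rightarrow> 'd::euclidean_space" and A :: "'d \<Rightarrow> real"
  assumes hb: "\<forall>x. hb x \<ge> 0" and k: "k \<ge> 1" and wt: "(w, th) \<in> esm_class \<Theta> k"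
    and j: "j \<in> {1..k}"
  defines "h \<equiv> (\<lambda>x. posterior hb T A k w th 1 x / posterior hb T A k w th j x)"
  shows "\<forall>x. 0 \<le> h x" "\<forall>x. hb x = 0 \<longrightarrow> h x = 0"
    "\<exists>c v b. c \<ge> 0 \<and> (\<forall>x. hb x > 0 \<longrightarrow> h x = c * exp (v \<bullet> T x + b))"
proof -
  have w0: "\<forall>g\<in>{1..k}. w g \<ge> 0" and ws: "(\<Sum>g\<in>{1..k}. w g) = 1"
    using wt by (auto simp: esm_class_def)
  have one: "1 \<in> {1..k}" using k by auto
  let ?e = "\<lambda>g x. ef_density hb T A (th g) x"
  let ?D = "\<lambda>x. (\<Sum>g\<in>{1..k}. w g * ?e g x)"
  have e0: "?e g x \<ge> 0" for g x using hb by (simp add: ef_density_def)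
  have D0: "?D x \<ge> 0" for x using w0 e0 by (intro sum_nonneg) auto
  have p0: "posterior hb T A k w th g x \<ge> 0" if "g \<in> {1..k}" for g x
    unfolding posterior_def using w0 that e0 D0 by (intro divide_nonneg_nonneg) auto
  show "\<forall>x. 0 \<le> h x" unfolding h_def using p0 one j by (auto intro: divide_nonneg_nonneg)
  show "\<forall>x. hb x = 0 \<longrightarrow> h x = 0" unfolding h_def posterior_def ef_density_def by simp
  obtain g0 where g0: "g0 \<in> {1..k}" "w g0 > 0"
  proof (rule ccontr)
    assume "\<not> thesis"
    then have "\<forall>g\<in>{1..k}. w g \<le> 0" using that by force
    then have "(\<Sum>g\<in>{1..k}. w g) \<le> 0" by (intro sum_nonpos) auto
    then show False using ws by simp
  qed
  define c where "c = w 1 / w j"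
  define v where "v = th 1 - th j"
  define b where "b = A (th j) - A (th 1)"
  have "c \<ge> 0" unfolding c_def using w0 one j by auto
  moreover have "h x = c * exp (v \<bullet> T x + b)" if x: "hb x > 0" for x
  proof -
    have epos: "?e g x > 0" for g using x by (simp add: ef_density_def)
    have "?D x > 0"
      by (rule sum_pos2[OF _ g0(1)]) (use g0 w0 epos e0 in auto)
    then have "h x = (w 1 * ?e 1 x) / (w j * ?e j x)"
      unfolding h_def posterior_def by (simp add: divide_simps)
    also have "\<dots> = c * (?e 1 x / ?e j x)" unfolding c_def by simp
    also have "?e 1 x / ?e j x = exp (v \<bullet> T x + b)"
      using x unfolding ef_density_def v_def b_def
      by (simp add: exp_diff[symmetric] inner_diff_left algebra_simps)
    finally show ?thesis .
  qed
  ultimately show "\<exists>c v b. c \<ge> 0 \<and> (\<forall>x. hb x > 0 \<longrightarrow> h x = c * exp (v \<bullet> T x + b))" by blast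
qed



theorem lemma3:
  fixes hb :: "'x \<Rightarrow> real" and T :: "'x \<Rightarrow> 'd::euclidean_space"
    and A :: "'d \<Rightarrow> real" and \<Theta> :: "'d set" and k :: nat
  assumes "\<forall>x. hb x \<ge> 0" and "k \<ge> 1"
  shows "pdim {(\<lambda>x. posterior hb T A k w th 1 x / posterior hb T A k w th j x) | j w th.
               j \<in> {1..k} \<and> (w, th) \<in> esm_class \<Theta> k}
         \<le> enat (DIM('d) + 1)"
proof -
  define H where "H = {(\<lambda>x. posterior hb T A k w th 1 x / posterior hb T A k w th j x) | j w th.
               j \<in> {1..k} \<and> (w, th) \<in> esm_class \<Theta> k}"
  have HF: "(\<forall>x. 0 \<le> h x) \<and> (\<forall>x. hb x = 0 \<longrightarrow> h x = 0) \<and>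
     (\<exists>c v b. c \<ge> 0 \<and> (\<forall>x. hb x > 0 \<longrightarrow> h x = c * exp (v \<bullet> T x + b)))" if hH: "h \<in> H" for h
  proof -
    obtain j w th where hj: "h = (\<lambda>x. posterior hb T A k w th 1 x / posterior hb T A k w th j x)"
      and j: "j \<in> {1..k}" and wt: "(w, th) \<in> esm_class \<Theta> k"
      using hH unfolding H_def mem_Collect_eq by (elim exE conjE) simp
    have f: "\<forall>x. 0 \<le> h x" "\<forall>x. hb x = 0 \<longrightarrow> h x = 0"
      "\<exists>c v b. c \<ge> 0 \<and> (\<forall>x. hb x > 0 \<longrightarrow> h x = c * exp (v \<bullet> T x + b))"
      unfolding hj by (rule post_facts[OF assms wt j, of T A])+
    show ?thesis using f by blast
  qed
  let ?C = "(\<lambda>h. {(x, r). h x \<ge> r}) ` H"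
  have bound: "card S \<le> DIM('d) + 1" if fin: "finite S" and sh: "shatters ?C S" for S
  proof (rule ccontr)
    assume "\<not> ?thesis"
    then have card: "card S \<ge> DIM('d) + 2" by simp
    have pat: "\<exists>h\<in>H. \<forall>q\<in>S. (q \<in> B \<longleftrightarrow> snd q \<le> h (fst q))" if BS: "B \<subseteq> S" for B
    proof -
      obtain c where c: "c \<in> ?C" "c \<inter> S = B"
        using sh[unfolded shatters_def, rule_format, OF BS] by blast
      obtain h where hH: "h \<in> H" and hc: "c = {(x, r). h x \<ge> r}" using c(1) by blast
      have "(q \<in> B \<longleftrightarrow> snd q \<le> h (fst q))" if q: "q \<in> S" for q
      proof -
        have "q \<in> B \<longleftrightarrow> q \<in> c" using c(2) q by blast
        also have "\<dots> \<longleftrightarrow> snd q \<le> h (fst q)" unfolding hc by (cases q) simp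
        finally show ?thesis .
      qed
      then show ?thesis using hH by blast
    qed
    have pos: "hb (fst q) > 0 \<and> snd q > 0" if q: "q \<in> S" for q
    proof -
      obtain h where h: "h \<in> H" "\<forall>p\<in>S. (p \<in> S - {q} \<longleftrightarrow> snd p \<le> h (fst p))"
        using pat[of "S - {q}"] by blast
      have "\<not> snd q \<le> h (fst q)" using h(2) q by blast
      moreover have "0 \<le> h (fst q)" using HF[OF h(1)] by blast
      ultimately have r: "snd q > 0" by linarith
      obtain h' where h': "h' \<in> H" "\<forall>p\<in>S. (p \<in> {q} \<longleftrightarrow> snd p \<le> h' (fst p))"
        using pat[of "{q}"] q by blast
      have "snd q \<le> h' (fst q)" using h'(2) q by blast
      then have "hb (fst q) \<noteq> 0" using r HF[OF h'(1)] by force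
      then show ?thesis using r assms(1) by (simp add: order_less_le)
    qed
    obtain l where l: "sum l S = 0" "(\<Sum>p\<in>S. l p *\<^sub>R T (fst p)) = 0" "\<exists>p\<in>S. l p \<noteq> 0"
      using dep_exists[OF fin card, of "\<lambda>p. T (fst p)"] by blast
    have ex: "\<exists>p0\<in>S. l p0 > 0" "\<exists>p1\<in>S. l p1 < 0"
    proof -
      obtain p where p: "p \<in> S" "l p \<noteq> 0" using l(3) by blast
      have "sum l S = l p + sum l (S - {p})" using fin p by (simp add: sum.remove)
      then have sr: "sum l (S - {p}) = - l p" using l(1) by simp
      show "\<exists>p0\<in>S. l p0 > 0"
      proof (cases "l p > 0")
        case False
        then have "sum l (S - {p}) > 0" using sr p by simp
        then obtain i where "i \<in> S - {p}" "l i > 0"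
          by (metis not_less sum_nonpos)
        then show ?thesis by blast
      qed (use p in blast)
      show "\<exists>p1\<in>S. l p1 < 0"
      proof (cases "l p < 0")
        case False
        then have "sum l (S - {p}) < 0" using sr p by simp
        then obtain i where "i \<in> S - {p}" "l i < 0"
          by (metis not_less sum_nonneg)
        then show ?thesis by blast
      qed (use p in blast)
    qed
    then obtain p0 p1 where p0: "p0 \<in> S" "l p0 > 0" and p1: "p1 \<in> S" "l p1 < 0" by blast
    have lin: "\<exists>v b. \<forall>q\<in>S. (q \<in> B \<longleftrightarrow> ln (snd q) \<le> v \<bullet> T (fst q) + b)"
      if B: "B \<subseteq> S" "q0 \<in> B" for B q0
    proof -
      obtain h where h: "h \<in> H" "\<forall>q\<in>S. (q \<in> B \<longleftrightarrow> snd q \<le> h (fst q))" using pat[OF B(1)] by blast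
      obtain c v b where cvb: "c \<ge> 0" "\<forall>x. hb x > 0 \<longrightarrow> h x = c * exp (v \<bullet> T x + b)"
        using HF[OF h(1)] by blast
      have q0S: "q0 \<in> S" using B by blast
      have "c \<noteq> 0"
      proof
        assume "c = 0"
        then have "h (fst q0) = 0" using cvb pos[OF q0S] by simp
        then show False using h B pos[OF q0S] q0S by force
      qed
      then have cp: "c > 0" using cvb by simp
      have "\<forall>q\<in>S. (q \<in> B \<longleftrightarrow> ln (snd q) \<le> (v \<bullet> T (fst q) + b + ln c))"
      proof
        fix q assume q: "q \<in> S"
        have "h (fst q) = exp (v \<bullet> T (fst q) + b + ln c)"
          using cvb pos[OF q] cp by (simp add: exp_add)
        then have "(snd q \<le> h (fst q)) = (ln (snd q) \<le> v \<bullet> T (fst q) + b + ln c)"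
          using pos[OF q] ln_le_cancel_iff[of "snd q" "exp (v \<bullet> T (fst q) + b + ln c)"] by simp
        then show "(q \<in> B \<longleftrightarrow> ln (snd q) \<le> (v \<bullet> T (fst q) + b + ln c))" using h q by blast
      qed
      then show ?thesis by (intro exI[of _ v] exI[of _ "b + ln c"]) (simp add: add.assoc)
    qed
    obtain v1 b1 where P: "\<forall>q\<in>S. (q \<in> {p\<in>S. l p > 0} \<longleftrightarrow> ln (snd q) \<le> v1 \<bullet> T (fst q) + b1)"
      using lin[of "{p\<in>S. l p > 0}" p0] p0 by blast
    obtain v2 b2 where N: "\<forall>q\<in>S. (q \<in> {p\<in>S. l p < 0} \<longleftrightarrow> ln (snd q) \<le> v2 \<bullet> T (fst q) + b2)"
      using lin[of "{p\<in>S. l p < 0}" p1] p1 by blast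
    show False
      by (rule key_contra[OF fin l(1) l(2) p0 p1, of "\<lambda>q. ln (snd q)" v1 b1 v2 b2])
         (use P N in simp_all)
  qed
  have "vc_dim ?C \<le> enat (DIM('d) + 1)"
    unfolding vc_dim_def using bound by (auto intro!: Sup_least)
  then show ?thesis unfolding pdim_def H_def .
qed

end
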